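(* In the setting described in the context (Assumptions A and B hold), let the VS-PGR scheme be run with step size $\alpha>0$ satisfying $\alpha\le L$ and a non-decreasing sequence of batch sizes $\{S_k\}$ with $S_0\ge 1/\alpha^2$. Let $\tilde L\triangleq\sqrt{1+2(1+2\alpha^2)\nu_1^2+2L^2}$ and $\nu^2\triangleq 2(1+2\alpha^2)\nu_1^2\|x^*\|^2+(1+2\alpha^2)\nu_2^2$. Then for every $k\ge0$, $$\mathbb{E}\big[\|x_{k+1}-x^*\|^2\mid\mathcal{F}_k\big]\le\big(1-2\alpha\eta+\alpha^2\tilde L^2\big)\|x_k-x^*\|^2+\frac{\nu^2}{S_k}\quad\text{a.s.}$$
   Context: Game: $n$ players; player $i$ chooses $x_i\in\mathbb{R}^{d_i}$, $x=(x_1,\dots,x_n)\in\mathbb{R}^d$, and solves $\min_{x_i} f_i(x_i,x_{-i})+r_i(x_i)$ with $f_i(x)=\mathbb{E}[\psi_i(x;\xi_i)]$, $\xi_i$ a random vector in $\mathbb{R}^{m_i}$, $\psi_i:\mathbb{R}^d\times\mathbb{R}^{m_i}\to\mathbb{R}$. A Nash equilibrium (NE) is $x^*$ such that for each $i$, $x_i^*$ minimizes $f_i(\cdot,x_{-i}^* )+r_i(\cdot)$. Assumption A: for each $i$, (i) $r_i$ is lower semicontinuous and convex with effective domain $\mathcal{R}_i$; (ii) for every $x_{-i}\in\prod_{j\ne i}\mathcal{R}_j$, $f_i(\cdot,x_{-i})$ is continuously differentiable and convex on an open set containing $\mathcal{R}_i$; (iii) for every such $x_{-i}$ and every $\xi_i$,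 $\psi_i(\cdot,x_{-i};\xi_i)$ is differentiable on an open set containing $\mathcal{R}_i$. Let $\mathcal{R}=\prod_j\mathcal{R}_j$ and $G(x)=(\nabla_{x_i}f_i(x))_{i=1}^n$. $\mathrm{prox}_{\alpha r_i}(z)=\arg\min_y\big(r_i(y)+\frac1{2\alpha}\|y-z\|^2\big)$. VS-PGR scheme: with $x_{i,0}\in\mathcal{R}_i$, at iteration $k$ each player $i$ draws $S_k$ realizations $\xi_{i,k}^1,\dots,\xi_{i,k}^{S_k}$ of $\xi_i$ and sets $x_{i,k+1}=\mathrm{prox}_{\alpha r_i}\big[x_{i,k}-\frac{\alpha}{S_k}\sum_{p=1}^{S_k}\nabla_{x_i}\psi_i(x_k;\xi_{i,k}^p)\big]$. Let $\bar w_{k,S_k}=\frac1{S_k}\sum_{p=1}^{S_k}(\nabla_{x_i}\psi_i(x_k;\xi_{i,k}^p))_{i=1}^n-G(x_k)$ and $\mathcal{F}_k=\sigma\{x_0,\dots,x_k\}$. Assumption B: (i) $\|G(x)-G(y)\|\le L\|x-y\|$ for all $x,y\in\mathcal{R}$; (ii) $(G(x)-G(y))^T(x-y)\ge\eta\|x-y\|^2$ for all $x,y\in\mathcal{R}$, with $\eta>0$; (iii) there are $\nu_1,\nu_2\ge0$ with $\mathbb{E}[\|\bar w_{k,S_k}\|^2\mid\mathcal{F}_k]\le(\nu_1^2\|x_k\|^2+\nu_2^2)/S_k$ a.s. for all $k\ge0$. Under these assumptions the NE $x^*$ exists and is unique. *)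

theory Defs
  imports "HOL-Analysis.Analysis" "HOL-Probability.Probability"
begin

text \<open>The map blk assigns each coordinate of R^d to the player owning it, so that
  R^d is the product of the players' spaces R^(d_i), where R^(d_i) is identified
  with the coordinate subspace blk_space blk i.\<close>

definition blk_space :: "('d::finite \<Rightarrow> 'n) \<Rightarrow> 'n \<Rightarrow> (real^'d) set" where
  "blk_space blk i = {y. \<forall>j. blk j \<noteq> i \<longrightarrow> y $ j = 0}"

text \<open>x_i, the block of player i (embedded in R^d, zero outside block i).\<close>
definition blk_proj :: "('d::finite \<Rightarrow> 'n) \<Rightarrow> 'n \<Rightarrow> real^'d \<Rightarrow> real^'d" where
  "blk_proj blk i x = (\<chi> j. if blk j = i then x $ j else 0)"

text \<open>(y_i, x_{-i}): replace player i's block of x by the block of y.\<close>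
definition blk_upd :: "('d::finite \<Rightarrow> 'n) \<Rightarrow> 'n \<Rightarrow> real^'d \<Rightarrow> real^'d \<Rightarrow> real^'d" where
  "blk_upd blk i x y = (\<chi> j. if blk j = i then y $ j else x $ j)"

text \<open>Effective domain R_i of r_i (r_i is a function on player i's space).\<close>
definition eff_dom :: "('d::finite \<Rightarrow> 'n) \<Rightarrow> 'n \<Rightarrow> (real^'d \<Rightarrow> ereal) \<Rightarrow> (real^'d) set" where
  "eff_dom blk i ri = {y \<in> blk_space blk i. ri y < \<infinity>}"

definition joint_dom :: "('d::finite \<Rightarrow> 'n) \<Rightarrow> ('n \<Rightarrow> real^'d \<Rightarrow> ereal) \<Rightarrow> (real^'d) set" where
  "joint_dom blk r = {x. \<forall>i. blk_proj blk i x \<in> eff_dom blk i (r i)}"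

definition lsc_on :: "'a::topological_space set \<Rightarrow> ('a \<Rightarrow> ereal) \<Rightarrow> bool" where
  "lsc_on S g \<longleftrightarrow> (\<forall>y\<in>S. g y \<le> Liminf (at y within S) g)"

definition prox :: "('d::finite \<Rightarrow> 'n) \<Rightarrow> 'n \<Rightarrow> real \<Rightarrow> (real^'d \<Rightarrow> ereal) \<Rightarrow> real^'d \<Rightarrow> real^'d" where
  "prox blk i \<alpha> ri z = (THE y. y \<in> blk_space blk i \<and>
      (\<forall>u\<in>blk_space blk i. ri y + ereal (norm (y - z)^2 / (2*\<alpha>)) \<le> ri u + ereal (norm (u - z)^2 / (2*\<alpha>))))"

definition is_NE :: "('d::finite \<Rightarrow> 'n) \<Rightarrow> ('n \<Rightarrow> real^'d \<Rightarrow> real) \<Rightarrow> ('n \<Rightarrow> real^'d \<Rightarrow> ereal) \<Rightarrow> real^'d \<Rightarrow> bool" where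
  "is_NE blk f r xs \<longleftrightarrow> (\<forall>i. \<forall>y\<in>blk_space blk i.
      ereal (f i xs) + r i (blk_proj blk i xs) \<le> ereal (f i (blk_upd blk i xs y)) + r i y)"

definition nat_filtration :: "'a measure \<Rightarrow> (nat \<Rightarrow> 'a \<Rightarrow> 'b::topological_space) \<Rightarrow> nat \<Rightarrow> 'a measure" where
  "nat_filtration M X k = sigma (space M) {X j -` A \<inter> space M | j A. j \<le> k \<and> A \<in> sets borel}"

end

theory Submission
  imports Defs
begin

lemma lsc_local:
  assumes "lsc_on V g" "y \<in> V" "ereal c < g y"
  shows "\<exists>d>0. \<forall>w\<in>V. dist w y < d \<longrightarrow> ereal c < g w"
proof -
  have "ereal c < Liminf (at y within V) g" using assms unfolding lsc_on_def
    using order_less_le_trans by blast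
  hence "eventually (\<lambda>w. ereal c < g w) (at y within V)" by (rule less_LiminfD)
  then obtain d where "d>0" "\<forall>w\<in>V. w \<noteq> y \<and> dist w y < d \<longrightarrow> ereal c < g w"
    unfolding eventually_at by auto
  thus ?thesis using assms(3) by metis
qed

lemma lsc_bdd_below:
  fixes g :: "'a::metric_space \<Rightarrow> ereal"
  assumes "lsc_on V g" "compact K" "K \<subseteq> V" "\<forall>y\<in>K. g y \<noteq> -\<infinity>"
  shows "\<exists>m. \<forall>y\<in>K. ereal m \<le> g y"
proof -
  define c where "c y = (if g y = \<infinity> then 0 else real_of_ereal (g y) - 1)" for y
  have cl: "ereal (c y) < g y" if "y\<in>K" for y
    using assms(4) that unfolding c_def by (cases "g y") auto
  have "\<forall>y\<in>K. \<exists>d>0. \<forall>w\<in>V. dist w y < d \<longrightarrow> ereal (c y) < g w"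
    using lsc_local[OF assms(1)] cl assms(3) by blast
  then obtain d where d: "\<forall>y\<in>K. d y > 0 \<and> (\<forall>w\<in>V. dist w y < d y \<longrightarrow> ereal (c y) < g w)"
    by metis
  have "K \<subseteq> (\<Union>y\<in>K. ball y (d y))" using d by auto
  then obtain T where T: "T \<subseteq> K" "finite T" "K \<subseteq> (\<Union>y\<in>T. ball y (d y))"
    using compactE_image[OF assms(2), of K "\<lambda>y. ball y (d y)"] by auto
  define m where "m = Min (insert 0 (c ` T))"
  have "ereal m \<le> g y" if yK: "y \<in> K" for y
  proof -
    obtain t where t: "t \<in> T" "dist t y < d t" using T(3) yK by auto
    hence "ereal (c t) < g y" using d T(1) assms(3) yK by (auto simp: dist_commute)
    moreover have "m \<le> c t" unfolding m_def using T(2) t(1) by auto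
    ultimately show ?thesis by (meson ereal_less_eq(3) less_imp_le order_trans)
  qed
  thus ?thesis by blast
qed

lemma lsc_min_compact:
  fixes \<phi> :: "'a::metric_space \<Rightarrow> ereal"
  assumes "compact C" "C \<noteq> {}"
    and H: "\<And>y c. y \<in> C \<Longrightarrow> ereal c < \<phi> y \<Longrightarrow> \<exists>d>0. \<forall>w\<in>C. dist w y < d \<longrightarrow> ereal c < \<phi> w"
  shows "\<exists>p\<in>C. \<forall>u\<in>C. \<phi> p \<le> \<phi> u"
proof (rule ccontr)
  assume "\<not> ?thesis"
  hence "\<forall>y\<in>C. \<exists>y'\<in>C. \<phi> y' < \<phi> y" by (auto simp: not_le)
  then obtain nx where nx: "\<forall>y\<in>C. nx y \<in> C \<and> \<phi> (nx y) < \<phi> y" by metis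
  have "\<forall>y\<in>C. \<exists>c. \<phi> (nx y) < ereal c \<and> ereal c < \<phi> y"
    using nx ereal_dense2 by blast
  then obtain c where c: "\<forall>y\<in>C. \<phi> (nx y) < ereal (c y) \<and> ereal (c y) < \<phi> y" by metis
  have "\<forall>y\<in>C. \<exists>d>0. \<forall>w\<in>C. dist w y < d \<longrightarrow> ereal (c y) < \<phi> w"
    using H c by blast
  then obtain d where d: "\<forall>y\<in>C. d y > 0 \<and> (\<forall>w\<in>C. dist w y < d y \<longrightarrow> ereal (c y) < \<phi> w)"
    by metis
  have "C \<subseteq> (\<Union>y\<in>C. ball y (d y))" using d by auto
  then obtain T where T: "T \<subseteq> C" "finite T" "C \<subseteq> (\<Union>y\<in>T. ball y (d y))"
    using compactE_image[OF assms(1), of C "\<lambda>y. ball y (d y)"] by auto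
  have "T \<noteq> {}" using T(3) assms(2) by auto
  obtain t0 where t0: "t0 \<in> T" "\<forall>t\<in>T. \<phi> (nx t0) \<le> \<phi> (nx t)"
    using arg_min_if_finite[OF T(2) \<open>T \<noteq> {}\<close>, of "\<lambda>t. \<phi> (nx t)"]
    by (meson not_le)
  have "nx t0 \<in> C" using nx t0 T by auto
  then obtain t where t: "t \<in> T" "dist t (nx t0) < d t" using T(3) by auto
  hence "ereal (c t) < \<phi> (nx t0)" using d T(1) \<open>nx t0 \<in> C\<close> by (auto simp: dist_commute)
  moreover have "\<phi> (nx t) < ereal (c t)" using c t T(1) by auto
  ultimately have "\<phi> (nx t) < \<phi> (nx t0)" by auto
  thus False using t0 t by (meson not_le)
qed

lemma eps_arg:
  fixes A B :: real
  assumes "\<And>t. 0 < t \<Longrightarrow> t \<le> 1 \<Longrightarrow> 0 \<le> A + t * B"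
  shows "0 \<le> A"
proof (rule ccontr)
  assume A: "\<not> 0 \<le> A"
  show False
  proof (cases "B \<le> 0")
    case True thus False using assms[of 1] A by auto
  next
    case False
    define t where "t = min 1 (-A/(2*B))"
    have t0: "0 < t" "t \<le> 1" using A False unfolding t_def by (auto simp: field_simps)
    have "t * B \<le> (-A/(2*B)) * B" unfolding t_def using False by (intro mult_right_mono) auto
    also have "\<dots> = -A/2" using False by (auto simp: field_simps)
    finally show False using assms[OF t0] A by auto
  qed
qed

lemma norm_add_sq:
  fixes a b :: "'a::real_inner"
  shows "norm (a + b)^2 = norm a^2 + 2 * (a \<bullet> b) + norm b^2"
  by (simp add: power2_norm_eq_inner inner_add_left inner_add_right inner_commute)

locale proxset =
  fixes V :: "'a::euclidean_space set" and g :: "'a \<Rightarrow> ereal" and \<alpha> :: real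
  assumes subV: "subspace V" and clV: "closed V"
    and conv: "convex_on {y\<in>V. g y < \<infinity>} (\<lambda>y. real_of_ereal (g y))"
    and proper: "\<And>y. y \<in> V \<Longrightarrow> g y \<noteq> -\<infinity>"
    and lsc: "lsc_on V g"
    and ne: "{y\<in>V. g y < \<infinity>} \<noteq> {}"
    and apos: "\<alpha> > 0"
begin

lemma phi_local:
  assumes "y \<in> V" "ereal c < g y + ereal (norm (y - z)^2 / (2*\<alpha>))"
  shows "\<exists>d>0. \<forall>w\<in>V. dist w y < d \<longrightarrow> ereal c < g w + ereal (norm (w - z)^2 / (2*\<alpha>))"
proof -
  define q where "q w = norm (w - z)^2 / (2*\<alpha>)" for w
  have "continuous_on UNIV q" unfolding q_def using apos by (intro continuous_intros) auto
  hence qc: "\<And>e. e > 0 \<Longrightarrow> \<exists>d>0. \<forall>w. dist w y < d \<longrightarrow> dist (q w) (q y) < e"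
    unfolding continuous_on_iff by blast
  have gw: "g w \<noteq> -\<infinity>" if "w \<in> V" for w using proper that by auto
  show ?thesis
  proof (cases "g y = \<infinity>")
    case True
    obtain d1 where d1: "d1 > 0" "\<forall>w\<in>V. dist w y < d1 \<longrightarrow> ereal (c - q y + 1) < g w"
      using lsc_local[OF lsc assms(1), of "c - q y + 1"] True by auto
    obtain d2 where d2: "d2 > 0" "\<forall>w. dist w y < d2 \<longrightarrow> dist (q w) (q y) < 1" using qc[of 1] by auto
    have "ereal c < g w + ereal (q w)" if "w \<in> V" "dist w y < min d1 d2" for w
    proof -
      have a: "ereal (c - q y + 1) < g w" using d1 that by auto
      have b: "q w > q y - 1" using d2 that by (auto simp: dist_real_def)
      show ?thesis using a b gw[OF that(1)] by (cases "g w") auto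
    qed
    thus ?thesis unfolding q_def using d1 d2 by (intro exI[of _ "min d1 d2"]) auto
  next
    case False
    then obtain a where a: "g y = ereal a" using proper[OF assms(1)] by (cases "g y") auto
    have ca: "c < a + q y" using assms(2) a unfolding q_def by auto
    define \<delta> where "\<delta> = (a + q y - c)/2"
    have dp: "\<delta> > 0" using ca unfolding \<delta>_def by auto
    obtain d1 where d1: "d1 > 0" "\<forall>w\<in>V. dist w y < d1 \<longrightarrow> ereal (a - \<delta>) < g w"
      using lsc_local[OF lsc assms(1), of "a - \<delta>"] a dp by auto
    obtain d2 where d2: "d2 > 0" "\<forall>w. dist w y < d2 \<longrightarrow> dist (q w) (q y) < \<delta>" using qc[OF dp] by auto
    have "ereal c < g w + ereal (q w)" if "w \<in> V" "dist w y < min d1 d2" for w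
    proof -
      have a1: "ereal (a - \<delta>) < g w" using d1 that by auto
      have b: "q w > q y - \<delta>" using d2 that by (auto simp: dist_real_def)
      show ?thesis
      proof (cases "g w")
        case (real r)
        hence "a - \<delta> < r" using a1 by auto
        moreover have "2 * \<delta> = a + q y - c" unfolding \<delta>_def by simp
        ultimately have "c < r + q w" using b by linarith
        thus ?thesis using real by auto
      qed (use gw[OF that(1)] in auto)
    qed
    thus ?thesis unfolding q_def using d1 d2 by (intro exI[of _ "min d1 d2"]) auto
  qed
qed

lemma ex_min:
  "\<exists>p\<in>V. \<forall>u\<in>V. g p + ereal (norm (p - z)^2 / (2*\<alpha>)) \<le> g u + ereal (norm (u - z)^2 / (2*\<alpha>))"
proof -
  define \<phi> where "\<phi> y = g y + ereal (norm (y - z)^2 / (2*\<alpha>))" for y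
  obtain y0 where y0: "y0 \<in> V" "g y0 < \<infinity>" using ne by auto
  define G0 where "G0 = real_of_ereal (g y0)"
  have gy0: "g y0 = ereal G0" using y0 proper unfolding G0_def by (cases "g y0") auto
  define K1 where "K1 = V \<inter> cball y0 1"
  have "compact K1" unfolding K1_def by (intro closed_Int_compact clV compact_cball)
  then obtain m where m: "\<forall>y\<in>K1. ereal m \<le> g y"
    using lsc_bdd_below[OF lsc, of K1] proper unfolding K1_def by auto
  define b where "b = max 0 (G0 - m)"
  have convD: "convex {y\<in>V. g y < \<infinity>}" using conv unfolding convex_on_def by auto
  have lb: "real_of_ereal (g y) \<ge> G0 - b * norm (y - y0)"
    if yV: "y \<in> V" and d1: "norm (y - y0) \<ge> 1" and gyf: "g y < \<infinity>" for y
  proof -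
    define d where "d = norm (y - y0)"
    define t where "t = 1 / d"
    have dpos: "d \<ge> 1" using d1 unfolding d_def by auto
    have t01: "0 < t" "t \<le> 1" using dpos unfolding t_def by auto
    define w where "w = (1 - t) *\<^sub>R y0 + t *\<^sub>R y"
    have wV: "w \<in> V" unfolding w_def using subV yV y0(1)
      by (intro subspace_add subspace_mul) auto
    have "w - y0 = t *\<^sub>R (y - y0)" unfolding w_def by (simp add: algebra_simps)
    hence "norm (w - y0) = 1" using dpos unfolding t_def d_def by auto
    hence wK: "w \<in> K1" unfolding K1_def using wV by (auto simp: dist_norm norm_minus_commute)
    have wD: "w \<in> {y\<in>V. g y < \<infinity>}" unfolding w_def
      using convexD[OF convD, of y0 y "1-t" t] y0 yV gyf t01 by auto
    have cv: "real_of_ereal (g w) \<le> (1 - t) * G0 + t * real_of_ereal (g y)"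
      using convex_onD[OF conv, of t y0 y] t01 y0 yV gyf unfolding w_def G0_def by auto
    have "ereal m \<le> g w" using m wK by auto
    hence "m \<le> real_of_ereal (g w)" using wD proper[OF wV] by (cases "g w") auto
    hence "m \<le> (1 - t) * G0 + t * real_of_ereal (g y)" using cv by auto
    hence "d * m \<le> d * ((1 - t) * G0 + t * real_of_ereal (g y))" using dpos by auto
    also have "\<dots> = (d - 1) * G0 + real_of_ereal (g y)" using dpos unfolding t_def
      by (simp add: field_simps)
    finally have "real_of_ereal (g y) \<ge> G0 + d * (m - G0)" by (simp add: algebra_simps)
    moreover have "d * (m - G0) \<ge> - (b * d)" unfolding b_def using dpos
      by (cases "G0 - m \<ge> 0") (auto simp: algebra_simps)
    ultimately show ?thesis unfolding d_def by (auto simp: algebra_simps)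
  qed
  define c0 where "c0 = norm (y0 - z)"
  define R where "R = 2 * c0 + 2 * \<alpha> * b + 1"
  have bpos: "b \<ge> 0" unfolding b_def by auto
  have c0pos: "c0 \<ge> 0" unfolding c0_def by auto
  have R1: "R \<ge> 1" unfolding R_def using bpos c0pos apos by auto
  have far: "\<phi> y0 < \<phi> y" if yV: "y \<in> V" and yR: "norm (y - y0) > R" for y
  proof (cases "g y = \<infinity>")
    case True thus ?thesis unfolding \<phi>_def gy0 by auto
  next
    case False
    hence gyf: "g y < \<infinity>" by (simp add: less_le)
    then obtain Gy where gy: "g y = ereal Gy" using proper[OF yV] by (cases "g y") auto
    define d where "d = norm (y - y0)"
    have dR: "d > R" using yR unfolding d_def by auto
    have lb1: "Gy \<ge> G0 - b * d" using lb[OF yV _ gyf] dR R1 gy unfolding d_def by auto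
    have tri: "d \<le> norm (y - z) + c0" unfolding d_def c0_def
      using norm_triangle_ineq[of "y - z" "z - y0"] by (simp add: norm_minus_commute)
    have "\<alpha> * b \<ge> 0" using apos bpos by auto
    hence dc: "d - c0 \<ge> 0" using dR c0pos unfolding R_def by auto
    have sq: "(d - c0)^2 \<le> norm (y - z)^2" using tri dc by (intro power_mono) auto
    have "d * (2 * \<alpha> * b) < d * (d - 2 * c0)" using dR R1 unfolding R_def
      by (intro mult_strict_left_mono) auto
    hence key: "c0^2 + 2 * \<alpha> * b * d < (d - c0)^2" by (simp add: power2_eq_square algebra_simps)
    have "G0 + c0^2 / (2*\<alpha>) < Gy + norm (y - z)^2 / (2*\<alpha>)"
    proof -
      have "c0^2 + 2 * \<alpha> * b * d < norm (y - z)^2" using key sq by auto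
      hence "(c0^2 + 2 * \<alpha> * b * d) / (2*\<alpha>) < norm (y - z)^2 / (2*\<alpha>)" using apos
        by (intro divide_strict_right_mono) auto
      hence "c0^2 / (2*\<alpha>) + b * d < norm (y - z)^2 / (2*\<alpha>)" using apos
        by (simp add: add_divide_distrib)
      thus ?thesis using lb1 by auto
    qed
    thus ?thesis unfolding \<phi>_def gy0 gy c0_def by auto
  qed
  define C where "C = V \<inter> cball y0 R"
  have Cc: "compact C" unfolding C_def by (intro closed_Int_compact clV compact_cball)
  have Cne: "C \<noteq> {}" unfolding C_def using y0 R1 by auto
  obtain p where p: "p \<in> C" "\<forall>u\<in>C. \<phi> p \<le> \<phi> u"
    using lsc_min_compact[OF Cc Cne, of \<phi>] phi_local unfolding C_def \<phi>_def by blast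
  have "\<phi> p \<le> \<phi> u" if "u \<in> V" for u
  proof (cases "u \<in> C")
    case True thus ?thesis using p by auto
  next
    case False
    hence "norm (u - y0) > R" using that unfolding C_def by (auto simp: dist_norm norm_minus_commute)
    hence "\<phi> y0 < \<phi> u" using far that by auto
    moreover have "y0 \<in> C" unfolding C_def using y0 R1 by auto
    ultimately show ?thesis using p by auto
  qed
  thus ?thesis using p unfolding C_def \<phi>_def by auto
qed

end

context proxset begin

lemma VI_min:
  assumes pV: "p \<in> V" and gp: "g p < \<infinity>"
    and VI: "\<forall>u\<in>V. g p + ereal ((z - p) \<bullet> (u - p) / \<alpha>) \<le> g u" and uV: "u \<in> V"
  shows "g p + ereal (norm (p - z)^2 / (2*\<alpha>)) + ereal (norm (u - p)^2 / (2*\<alpha>))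
         \<le> g u + ereal (norm (u - z)^2 / (2*\<alpha>))"
proof (cases "g u = \<infinity>")
  case True thus ?thesis by auto
next
  case False
  then obtain Gu where gu: "g u = ereal Gu" using proper[OF uV] by (cases "g u") auto
  obtain Gp where gpp: "g p = ereal Gp" using proper[OF pV] gp by (cases "g p") auto
  have vi: "Gp + (z - p) \<bullet> (u - p) / \<alpha> \<le> Gu" using VI uV gu gpp by auto
  have e: "norm (u - z)^2 = norm (u - p)^2 + 2 * ((u - p) \<bullet> (p - z)) + norm (p - z)^2"
    using norm_add_sq[of "u - p" "p - z"] by simp
  have i: "(u - p) \<bullet> (p - z) = - ((z - p) \<bullet> (u - p))"
    by (simp add: inner_commute inner_diff_left inner_diff_right)
  have "Gp + norm (p - z)^2 / (2*\<alpha>) + norm (u - p)^2 / (2*\<alpha>) \<le> Gu + norm (u - z)^2 / (2*\<alpha>)"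
  proof -
    have "norm (u - z)^2 / (2*\<alpha>) = norm (u - p)^2 / (2*\<alpha>) + norm (p - z)^2 / (2*\<alpha>)
          - ((z - p) \<bullet> (u - p)) / \<alpha>"
      unfolding e i using apos by (simp add: field_simps)
    thus ?thesis using vi by linarith
  qed
  thus ?thesis using gu gpp by simp
qed

lemma min_VI:
  assumes pV: "p \<in> V"
    and pmin: "\<forall>u\<in>V. g p + ereal (norm (p - z)^2 / (2*\<alpha>)) \<le> g u + ereal (norm (u - z)^2 / (2*\<alpha>))"
  shows "g p < \<infinity> \<and> (\<forall>u\<in>V. g p + ereal ((z - p) \<bullet> (u - p) / \<alpha>) \<le> g u)"
proof -
  obtain y0 where y0: "y0 \<in> V" "g y0 < \<infinity>" using ne by auto
  have gp: "g p < \<infinity>"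
  proof (rule ccontr)
    assume "\<not> g p < \<infinity>"
    hence "g p = \<infinity>" by (simp add: less_le)
    thus False using pmin y0 by auto
  qed
  obtain Gp where gpp: "g p = ereal Gp" using proper[OF pV] gp by (cases "g p") auto
  have "g p + ereal ((z - p) \<bullet> (u - p) / \<alpha>) \<le> g u" if uV: "u \<in> V" for u
  proof (cases "g u = \<infinity>")
    case True thus ?thesis by auto
  next
    case False
    hence guf: "g u < \<infinity>" by (simp add: less_le)
    then obtain Gu where gu: "g u = ereal Gu" using proper[OF uV] by (cases "g u") auto
    define a where "a = (p - z) \<bullet> (u - p)"
    define B where "B = norm (u - p)^2 / (2*\<alpha>)"
    have "0 \<le> (Gu - Gp + a / \<alpha>) + t * B" if t: "0 < t" "t \<le> 1" for t
    proof -
      define pt where "pt = (1 - t) *\<^sub>R p + t *\<^sub>R u"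
      have ptV: "pt \<in> V" unfolding pt_def using subV uV pV by (intro subspace_add subspace_mul) auto
      have cvx: "convex {y\<in>V. g y < \<infinity>}" using conv unfolding convex_on_def by auto
      have ptD: "pt \<in> {y\<in>V. g y < \<infinity>}" unfolding pt_def
        using convexD[OF cvx, of p u "1-t" t] pV uV gp guf t by auto
      have cv: "real_of_ereal (g pt) \<le> (1 - t) * Gp + t * Gu"
        using convex_onD[OF conv, of t p u] t pV uV gp guf gpp gu unfolding pt_def by auto
      obtain Gt where gt: "g pt = ereal Gt" using proper[OF ptV] ptD by (cases "g pt") auto
      have "g p + ereal (norm (p - z)^2 / (2*\<alpha>)) \<le> g pt + ereal (norm (pt - z)^2 / (2*\<alpha>))"
        using pmin ptV by auto
      hence m1: "Gp + norm (p - z)^2 / (2*\<alpha>) \<le> Gt + norm (pt - z)^2 / (2*\<alpha>)" using gt gpp by auto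
      have "pt - z = (p - z) + t *\<^sub>R (u - p)" unfolding pt_def by (simp add: algebra_simps)
      hence "norm (pt - z)^2 = norm ((p - z) + t *\<^sub>R (u - p))^2" by (simp only:)
      also have "\<dots> = norm (p - z)^2 + 2 * (t * a) + t^2 * norm (u - p)^2"
        using norm_add_sq[of "p - z" "t *\<^sub>R (u - p)"] unfolding a_def
        by (simp add: power_mult_distrib)
      finally have "norm (pt - z)^2 = norm (p - z)^2 + 2 * (t * a) + t^2 * norm (u - p)^2" .
      hence "norm (pt - z)^2 / (2*\<alpha>) = norm (p - z)^2 / (2*\<alpha>) + t * (a / \<alpha>) + t * (t * B)"
        unfolding B_def using apos by (simp add: field_simps power2_eq_square)
      hence X: "Gp \<le> Gt + t * (a / \<alpha>) + t * (t * B)" using m1 by linarith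
      have Y: "(1 - t) * Gp = Gp - t * Gp" "t * (Gu - Gp) = t * Gu - t * Gp" by (simp_all add: algebra_simps)
      have "0 \<le> t * (Gu - Gp) + t * (a / \<alpha>) + t * (t * B)" using X Y cv gt by simp
      hence "0 \<le> t * ((Gu - Gp + a / \<alpha>) + t * B)" by (simp add: algebra_simps)
      thus ?thesis using t by (simp add: zero_le_mult_iff)
    qed
    hence "0 \<le> Gu - Gp + a / \<alpha>" by (rule eps_arg)
    moreover have "(z - p) \<bullet> (u - p) = - a" unfolding a_def by (simp add: inner_diff_left)
    ultimately show ?thesis using gu gpp by simp
  qed
  thus ?thesis using gp by auto
qed

lemma min_unique:
  assumes "p1 \<in> V" "p2 \<in> V"
    and m1: "\<forall>u\<in>V. g p1 + ereal (norm (p1 - z)^2 / (2*\<alpha>)) \<le> g u + ereal (norm (u - z)^2 / (2*\<alpha>))"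
    and m2: "\<forall>u\<in>V. g p2 + ereal (norm (p2 - z)^2 / (2*\<alpha>)) \<le> g u + ereal (norm (u - z)^2 / (2*\<alpha>))"
  shows "p1 = p2"
proof -
  have v1: "g p1 < \<infinity>" "\<forall>u\<in>V. g p1 + ereal ((z - p1) \<bullet> (u - p1) / \<alpha>) \<le> g u"
    using min_VI[OF assms(1) m1] by auto
  obtain G1 where g1: "g p1 = ereal G1" using proper[OF assms(1)] v1 by (cases "g p1") auto
  have "g p1 + ereal (norm (p1 - z)^2 / (2*\<alpha>)) + ereal (norm (p2 - p1)^2 / (2*\<alpha>))
         \<le> g p2 + ereal (norm (p2 - z)^2 / (2*\<alpha>))"
    using VI_min[OF assms(1) v1 assms(2)] .
  also have "\<dots> \<le> g p1 + ereal (norm (p1 - z)^2 / (2*\<alpha>))" using m2 assms(1) by auto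
  finally have "norm (p2 - p1)^2 / (2*\<alpha>) \<le> 0" using g1 by simp
  hence "norm (p2 - p1)^2 \<le> 0" using apos by (simp add: divide_le_0_iff)
  thus ?thesis by simp
qed

lemma VI_nonexp:
  assumes "p \<in> V" "q \<in> V" "g p < \<infinity>" "g q < \<infinity>"
    and vp: "\<forall>u\<in>V. g p + ereal ((a - p) \<bullet> (u - p) / \<alpha>) \<le> g u"
    and vq: "\<forall>u\<in>V. g q + ereal ((b - q) \<bullet> (u - q) / \<alpha>) \<le> g u"
  shows "norm (p - q) \<le> norm (a - b)"
proof -
  obtain Gp where gp: "g p = ereal Gp" using proper[OF assms(1)] assms(3) by (cases "g p") auto
  obtain Gq where gq: "g q = ereal Gq" using proper[OF assms(2)] assms(4) by (cases "g q") auto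
  have 1: "Gp + (a - p) \<bullet> (q - p) / \<alpha> \<le> Gq" using vp assms(2) gp gq by auto
  have 2: "Gq + (b - q) \<bullet> (p - q) / \<alpha> \<le> Gp" using vq assms(1) gp gq by auto
  have "((a - p) \<bullet> (q - p) + (b - q) \<bullet> (p - q)) / \<alpha> \<le> 0" using 1 2 by (simp add: add_divide_distrib)
  hence 3: "(a - p) \<bullet> (q - p) + (b - q) \<bullet> (p - q) \<le> 0" using apos by (simp add: divide_le_0_iff)
  have e1: "(a - p) \<bullet> (q - p) = - ((a - p) \<bullet> (p - q))"
    by (metis inner_minus_right minus_diff_eq)
  have e2: "(b - q) \<bullet> (p - q) - (a - p) \<bullet> (p - q) = ((b - q) - (a - p)) \<bullet> (p - q)"
    by (simp only: inner_diff_left)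
  have e3: "((b - q) - (a - p)) \<bullet> (p - q) = ((p - q) - (a - b)) \<bullet> (p - q)"
    by (rule arg_cong[where f="\<lambda>v. v \<bullet> (p - q)"]) (simp add: algebra_simps)
  have e4: "((p - q) - (a - b)) \<bullet> (p - q) = norm (p - q)^2 - (a - b) \<bullet> (p - q)"
    by (simp only: inner_diff_left power2_norm_eq_inner)
  have "(a - p) \<bullet> (q - p) + (b - q) \<bullet> (p - q) = norm (p - q)^2 - (a - b) \<bullet> (p - q)"
    using e1 e2 e3 e4 by linarith
  hence "norm (p - q)^2 \<le> (a - b) \<bullet> (p - q)" using 3 by simp
  also have "\<dots> \<le> norm (a - b) * norm (p - q)" by (rule norm_cauchy_schwarz)
  finally have 4: "norm (p - q) * norm (p - q) \<le> norm (a - b) * norm (p - q)" by (simp add: power2_eq_square)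
  show ?thesis
  proof (cases "norm (p - q) = 0")
    case True thus ?thesis by simp
  next
    case False thus ?thesis using 4 by (simp add: mult_le_cancel_right)
  qed
qed

end

lemma prox_props:
  assumes ps: "proxset (blk_space blk i) g \<alpha>"
  shows "prox blk i \<alpha> g z \<in> blk_space blk i \<and> g (prox blk i \<alpha> g z) < \<infinity> \<and>
    (\<forall>u\<in>blk_space blk i. g (prox blk i \<alpha> g z) + ereal ((z - prox blk i \<alpha> g z) \<bullet> (u - prox blk i \<alpha> g z) / \<alpha>) \<le> g u)"
proof -
  interpret proxset "blk_space blk i" g \<alpha> by (rule ps)
  obtain p where p: "p \<in> blk_space blk i" "\<forall>u\<in>blk_space blk i. g p + ereal (norm (p - z)^2 / (2*\<alpha>)) \<le> g u + ereal (norm (u - z)^2 / (2*\<alpha>))"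
    using ex_min[of z] by blast
  have "prox blk i \<alpha> g z = p" unfolding prox_def
  proof (rule the_equality)
    show "p \<in> blk_space blk i \<and> (\<forall>u\<in>blk_space blk i. g p + ereal (norm (p - z)^2 / (2*\<alpha>)) \<le> g u + ereal (norm (u - z)^2 / (2*\<alpha>)))"
      using p by blast
    fix y assume y: "y \<in> blk_space blk i \<and> (\<forall>u\<in>blk_space blk i. g y + ereal (norm (y - z)^2 / (2*\<alpha>)) \<le> g u + ereal (norm (u - z)^2 / (2*\<alpha>)))"
    show "y = p" using min_unique[of y p z] y p by blast
  qed
  thus ?thesis using p min_VI[OF p(1) p(2)] by auto
qed

lemma prox_eqI:
  assumes ps: "proxset (blk_space blk i) g \<alpha>"
    and p: "p \<in> blk_space blk i" "g p < \<infinity>"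
      "\<forall>u\<in>blk_space blk i. g p + ereal ((z - p) \<bullet> (u - p) / \<alpha>) \<le> g u"
  shows "prox blk i \<alpha> g z = p"
proof -
  interpret proxset "blk_space blk i" g \<alpha> by (rule ps)
  have pm: "\<forall>u\<in>blk_space blk i. g p + ereal (norm (p - z)^2 / (2*\<alpha>)) \<le> g u + ereal (norm (u - z)^2 / (2*\<alpha>))"
  proof
    fix u assume u: "u \<in> blk_space blk i"
    have "g p + ereal (norm (p - z)^2 / (2*\<alpha>)) \<le> g p + ereal (norm (p - z)^2 / (2*\<alpha>)) + ereal (norm (u - p)^2 / (2*\<alpha>))"
      using apos by (intro ereal_le_add_self) auto
    also have "\<dots> \<le> g u + ereal (norm (u - z)^2 / (2*\<alpha>))" by (rule VI_min[OF p u])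
    finally show "g p + ereal (norm (p - z)^2 / (2*\<alpha>)) \<le> g u + ereal (norm (u - z)^2 / (2*\<alpha>))" .
  qed
  show ?thesis unfolding prox_def
  proof (rule the_equality)
    show "p \<in> blk_space blk i \<and> (\<forall>u\<in>blk_space blk i. g p + ereal (norm (p - z)^2 / (2*\<alpha>)) \<le> g u + ereal (norm (u - z)^2 / (2*\<alpha>)))"
      using p pm by blast
    fix y assume y: "y \<in> blk_space blk i \<and> (\<forall>u\<in>blk_space blk i. g y + ereal (norm (y - z)^2 / (2*\<alpha>)) \<le> g u + ereal (norm (u - z)^2 / (2*\<alpha>)))"
    show "y = p" using min_unique[of y p z] y p pm by blast
  qed
qed

lemma nadd_sq:
  fixes a b :: "'a::real_inner"
  shows "norm (a + b)^2 = norm a^2 + 2 * (a \<bullet> b) + norm b^2"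
  by (simp add: power2_norm_eq_inner inner_add_left inner_add_right inner_commute)

lemma blk_proj_nth [simp]: "blk_proj blk i x $ j = (if blk j = i then x $ j else 0)"
  by (simp add: blk_proj_def)

lemma blk_proj_in: "blk_proj blk i x \<in> blk_space blk i"
  by (simp add: blk_space_def)

lemma blk_proj_id: "y \<in> blk_space blk i \<Longrightarrow> blk_proj blk i y = y"
  by (auto simp: blk_space_def vec_eq_iff)

lemma blk_proj_add: "blk_proj blk i (a + b) = blk_proj blk i a + blk_proj blk i b"
  by (simp add: vec_eq_iff)

lemma blk_proj_diff: "blk_proj blk i (a - b) = blk_proj blk i a - blk_proj blk i b"
  by (simp add: vec_eq_iff)

lemma blk_proj_scale: "blk_proj blk i (c *\<^sub>R a) = c *\<^sub>R blk_proj blk i a"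
  by (simp add: vec_eq_iff)

lemma blk_proj_zero: "blk_proj blk i 0 = 0"
  by (simp add: vec_eq_iff)

lemma blk_proj_sum: "blk_proj blk i (sum f A) = sum (\<lambda>a. blk_proj blk i (f a)) A"
  by (induction A rule: infinite_finite_induct) (auto simp: blk_proj_add blk_proj_zero)

lemma blk_proj_proj: "blk_proj blk i (blk_proj blk m v) = (if m = i then blk_proj blk i v else 0)"
  by (auto simp: vec_eq_iff)

lemma blk_sum:
  fixes blk :: "'d::finite \<Rightarrow> 'n::finite"
  shows "(\<Sum>i\<in>UNIV. blk_proj blk i v) = v"
  by (simp add: vec_eq_iff)

lemma blk_norm:
  fixes blk :: "'d::finite \<Rightarrow> 'n::finite"
  shows "norm v ^ 2 = (\<Sum>i\<in>UNIV. norm (blk_proj blk i v) ^ 2)"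
proof -
  have "norm v ^ 2 = (\<Sum>j\<in>UNIV. v $ j * v $ j)" by (simp add: power2_norm_eq_inner inner_vec_def)
  also have "\<dots> = (\<Sum>j\<in>UNIV. \<Sum>i\<in>UNIV. (blk_proj blk i v $ j) * (blk_proj blk i v $ j))"
  proof -
    have h: "(if blk j = i then v$j else 0) * (if blk j = i then v$j else 0) = (if blk j = i then v$j * v$j else (0::real))" for j i
      by simp
    show ?thesis unfolding blk_proj_nth h by simp
  qed
  also have "\<dots> = (\<Sum>i\<in>UNIV. \<Sum>j\<in>UNIV. (blk_proj blk i v $ j) * (blk_proj blk i v $ j))"
    by (rule sum.swap)
  also have "\<dots> = (\<Sum>i\<in>UNIV. norm (blk_proj blk i v) ^ 2)"
    by (simp only: power2_norm_eq_inner inner_vec_def inner_real_def)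
  finally show ?thesis .
qed

lemma blk_inner: "u \<in> blk_space blk i \<Longrightarrow> G \<bullet> u = blk_proj blk i G \<bullet> u"
  unfolding inner_vec_def blk_space_def by (intro sum.cong) auto

lemma blk_upd_proj: "blk_upd blk i x (blk_proj blk i x) = x"
  by (simp add: blk_upd_def vec_eq_iff)

lemma blk_space_closed: "closed (blk_space blk i)"
proof -
  have "blk_space blk i = (\<Inter>j\<in>{j. blk j \<noteq> i}. {y. y $ j = 0})" unfolding blk_space_def by auto
  moreover have "closed {y::real^'a. y $ j = 0}" for j
    by (intro closed_Collect_eq continuous_intros)
  ultimately show ?thesis by auto
qed

lemma blk_space_subspace: "subspace (blk_space blk i)"
  by (simp add: subspace_def blk_space_def)

lemma blk_proj_linear: "linear (blk_proj blk i)"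
  by (intro linearI) (simp_all add: blk_proj_add blk_proj_scale)

lemma blk_proj_meas: "blk_proj blk i \<in> borel_measurable borel"
  by (intro borel_measurable_continuous_onI linear_continuous_on linear_conv_bounded_linear[THEN iffD1] blk_proj_linear)

lemma key_ineq:
  fixes e D w :: "'a::real_inner"
  assumes De: "D \<bullet> e \<ge> \<eta> * norm e ^ 2" and DL: "norm D \<le> L * norm e" and ap: "\<alpha> > 0" and L0: "L \<ge> 0"
  shows "norm (e - \<alpha> *\<^sub>R (D + w))^2 \<le> (1 - 2*\<alpha>*\<eta> + \<alpha>^2*(1 + 2*L^2)) * norm e^2 + (1 + 2*\<alpha>^2) * norm w^2"
proof -
  define E where "E = norm e^2"
  define W where "W = norm w^2"
  define P where "P = D \<bullet> e"
  define Q where "Q = e \<bullet> w"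
  define N where "N = norm (D + w)^2"
  have nds: "norm (a - b)^2 = norm a^2 - 2 * (a \<bullet> b) + norm b^2" for a b :: 'a
    using nadd_sq[of a "-b"] by simp
  have i1: "e \<bullet> (\<alpha> *\<^sub>R (D + w)) = \<alpha> * (P + Q)"
    unfolding P_def Q_def by (simp add: inner_add_right inner_commute)
  have i2: "norm (\<alpha> *\<^sub>R (D + w))^2 = \<alpha>^2 * N"
    unfolding N_def using ap by (simp add: power_mult_distrib)
  have 1: "norm (e - \<alpha> *\<^sub>R (D + w))^2 = E - 2*\<alpha>*P - 2*\<alpha>*Q + \<alpha>^2 * N"
    unfolding nds i1 i2 E_def by (simp add: algebra_simps)
  have "0 \<le> norm (D - w)^2" by simp
  hence "0 \<le> norm D^2 - 2 * (D \<bullet> w) + W" unfolding nds W_def .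
  moreover have "N = norm D^2 + 2 * (D \<bullet> w) + W" unfolding N_def W_def by (rule nadd_sq)
  ultimately have 2: "N \<le> 2 * norm D^2 + 2 * W" by linarith
  have "0 \<le> norm (\<alpha> *\<^sub>R e + w)^2" by simp
  moreover have "norm (\<alpha> *\<^sub>R e + w)^2 = \<alpha>^2 * E + 2 * (\<alpha> * Q) + W"
    unfolding nadd_sq E_def W_def Q_def using ap by (simp add: power_mult_distrib)
  ultimately have 3: "- 2*\<alpha>*Q \<le> \<alpha>^2 * E + W" by linarith
  have 4: "norm D^2 \<le> L^2 * E" unfolding E_def
    using power_mono[OF DL norm_ge_zero] by (simp add: power_mult_distrib)
  have 5: "N \<le> 2 * L^2 * E + 2 * W" using 2 4 by linarith
  have 6: "\<alpha>^2 * N \<le> \<alpha>^2 * (2 * L^2 * E + 2 * W)" using 5 by (intro mult_left_mono) auto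
  have 7: "\<alpha> * (\<eta> * E) \<le> \<alpha> * P" using De ap unfolding P_def E_def by (intro mult_left_mono) auto
  have "norm (e - \<alpha> *\<^sub>R (D + w))^2 \<le> E - 2*(\<alpha> * (\<eta> * E)) + (\<alpha>^2 * E + W) + \<alpha>^2 * (2 * L^2 * E + 2 * W)"
    using 1 3 6 7 by linarith
  also have "\<dots> = (1 - 2*\<alpha>*\<eta> + \<alpha>^2*(1 + 2*L^2)) * E + (1 + 2*\<alpha>^2) * W"
    by (simp add: algebra_simps)
  finally show ?thesis unfolding E_def W_def .
qed

lemma key_nonneg:
  fixes e D :: "'a::real_inner"
  assumes De: "D \<bullet> e \<ge> \<eta> * norm e ^ 2" and DL: "norm D \<le> L * norm e" and ep: "\<eta> > 0"
  shows "0 \<le> (1 - 2*\<alpha>*\<eta> + \<alpha>^2*(1 + 2*L^2)) * norm e^2"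
proof (cases "e = 0")
  case True thus ?thesis by simp
next
  case False
  hence en: "norm e > 0" by simp
  have "\<eta> * norm e ^ 2 \<le> norm D * norm e" using De norm_cauchy_schwarz[of D e] by linarith
  also have "\<dots> \<le> L * norm e * norm e" using DL en by (intro mult_right_mono) auto
  finally have "\<eta> * norm e ^ 2 \<le> L * norm e ^ 2" by (simp add: power2_eq_square algebra_simps)
  hence eL: "\<eta> \<le> L" using en by simp
  hence "\<eta>^2 \<le> L^2" using ep by (intro power_mono) auto
  moreover have "L^2 \<ge> 0" by simp
  ultimately have "\<eta>^2 \<le> 1 + 2*L^2" by linarith
  hence "\<alpha>^2 * \<eta>^2 \<le> \<alpha>^2 * (1 + 2*L^2)" by (intro mult_left_mono) auto
  moreover have "0 \<le> (1 - \<alpha>*\<eta>)^2" by simp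
  ultimately have "0 \<le> 1 - 2*\<alpha>*\<eta> + \<alpha>^2*(1 + 2*L^2)" by (simp add: power2_eq_square algebra_simps)
  thus ?thesis by simp
qed

lemma final_real:
  fixes E X s a n1 n2 xsn \<eta> L :: real
  assumes s1: "1 / s \<le> a^2" and sp: "s > 0" and E0: "E \<ge> 0" and X: "X \<le> 2*E + 2*xsn"
  shows "(1 - 2*a*\<eta> + a^2*(1 + 2*L^2)) * E + (1 + 2*a^2) * ((n1^2 * X + n2^2) / s)
     \<le> (1 - 2*a*\<eta> + a^2 * (sqrt (1 + 2*(1 + 2*a^2)*n1^2 + 2*L^2))^2) * E
        + (2*(1 + 2*a^2)*n1^2*xsn + (1 + 2*a^2)*n2^2) / s"
proof -
  define K where "K = 1 + 2*a^2"
  have K0: "K > 0" unfolding K_def by (simp add: add_pos_nonneg)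
  have sq: "(sqrt (1 + 2*K*n1^2 + 2*L^2))^2 = 1 + 2*K*n1^2 + 2*L^2"
    using K0 by (intro real_sqrt_pow2) (simp add: add_nonneg_nonneg)
  have "n1^2 * X \<le> n1^2 * (2*E + 2*xsn)" using X by (intro mult_left_mono) auto
  hence "K * (n1^2 * X + n2^2) \<le> K * (n1^2 * (2*E + 2*xsn) + n2^2)" using K0 by (intro mult_left_mono) auto
  hence "K * ((n1^2 * X + n2^2) / s) \<le> K * ((n1^2 * (2*E + 2*xsn) + n2^2) / s)"
    using sp by (simp add: divide_right_mono)
  also have "\<dots> = (2*K*n1^2*E) * (1/s) + (2*K*n1^2*xsn + K*n2^2) / s"
    using sp by (simp add: field_simps)
  also have "\<dots> \<le> (2*K*n1^2*E) * a^2 + (2*K*n1^2*xsn + K*n2^2) / s"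
    using s1 K0 E0 by (intro add_right_mono mult_left_mono) auto
  finally have 1: "K * ((n1^2 * X + n2^2) / s) \<le> (2*K*n1^2*E) * a^2 + (2*K*n1^2*xsn + K*n2^2) / s" .
  have 2: "(1 - 2*a*\<eta> + a^2 * (1 + 2*K*n1^2 + 2*L^2)) * E = (1 - 2*a*\<eta> + a^2*(1 + 2*L^2)) * E + (2*K*n1^2*E) * a^2"
    by (simp add: algebra_simps)
  show ?thesis using 1 2 unfolding K_def[symmetric] sq by linarith
qed

theorem lemma2:
  fixes M :: "'a measure"
    and blk :: "'d::finite \<Rightarrow> 'n::finite"
    and f :: "'n \<Rightarrow> real^'d \<Rightarrow> real"
    and r :: "'n \<Rightarrow> real^'d \<Rightarrow> ereal"
    and \<psi> :: "'n \<Rightarrow> real^'d \<Rightarrow> 's \<Rightarrow> real"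
    and g\<psi> :: "'n \<Rightarrow> real^'d \<Rightarrow> 's \<Rightarrow> real^'d"
    and G :: "real^'d \<Rightarrow> real^'d"
    and \<xi> :: "'n \<Rightarrow> nat \<Rightarrow> nat \<Rightarrow> 'a \<Rightarrow> 's"
    and x :: "nat \<Rightarrow> 'a \<Rightarrow> real^'d"
    and S :: "nat \<Rightarrow> nat"
    and xs :: "real^'d"
    and \<alpha> L \<eta> \<nu>\<^sub>1 \<nu>\<^sub>2 :: real
    and k :: nat
  assumes prob: "prob_space M"
    \<comment> \<open>Assumption A(i)\<close>
    and A1_convex: "\<And>i. convex_on (eff_dom blk i (r i)) (\<lambda>y. real_of_ereal (r i y))"
    and A1_proper: "\<And>i y. y \<in> blk_space blk i \<Longrightarrow> r i y \<noteq> -\<infinity>"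
    and A1_lsc: "\<And>i. lsc_on (blk_space blk i) (r i)"
    \<comment> \<open>Assumption A(ii)\<close>
    and A2: "\<And>i z. (\<forall>m. m \<noteq> i \<longrightarrow> blk_proj blk m z \<in> eff_dom blk m (r m)) \<Longrightarrow>
        \<exists>U. open U \<and> eff_dom blk i (r i) \<subseteq> U \<and>
            convex_on U (\<lambda>y. f i (blk_upd blk i z y)) \<and>
            (\<exists>g. (\<forall>y\<in>U. ((\<lambda>y. f i (blk_upd blk i z y)) has_derivative (\<lambda>v. g y \<bullet> v)) (at y))
                 \<and> continuous_on U g)"
    \<comment> \<open>Assumption A(iii)\<close>
    and A3: "\<And>i z s. (\<forall>m. m \<noteq> i \<longrightarrow> blk_proj blk m z \<in> eff_dom blk m (r m)) \<Longrightarrow>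
        \<exists>U. open U \<and> eff_dom blk i (r i) \<subseteq> U \<and>
            (\<forall>y\<in>U. (\<lambda>y. \<psi> i (blk_upd blk i z y) s) differentiable (at y))"
    \<comment> \<open>f_i(x) = E[psi_i(x; xi_i)]; each sample xi_{i,k}^p is a realization of xi_i\<close>
    and f_exp: "\<And>i k p z. p < S k \<Longrightarrow>
        integrable M (\<lambda>\<omega>. \<psi> i z (\<xi> i k p \<omega>)) \<and> f i z = (\<integral>\<omega>. \<psi> i z (\<xi> i k p \<omega>) \<partial>M)"
    \<comment> \<open>g\<psi> i z s is (block i of) the gradient of psi_i(., z_{-i}; s) at z_i\<close>
    and g\<psi>_grad: "\<And>i z s. z \<in> joint_dom blk r \<Longrightarrow>
        ((\<lambda>y. \<psi> i (blk_upd blk i z y) s) has_derivative (\<lambda>v. g\<psi> i z s \<bullet> blk_proj blk i v))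
          (at (blk_proj blk i z))"
    \<comment> \<open>G(z) = (grad_{x_i} f_i(z))_i\<close>
    and G_grad: "\<And>i z. z \<in> joint_dom blk r \<Longrightarrow>
        ((\<lambda>y. f i (blk_upd blk i z y)) has_derivative (\<lambda>v. G z \<bullet> blk_proj blk i v))
          (at (blk_proj blk i z))"
    \<comment> \<open>Assumption B(i), B(ii)\<close>
    and B1: "\<And>u v. u \<in> joint_dom blk r \<Longrightarrow> v \<in> joint_dom blk r \<Longrightarrow>
        norm (G u - G v) \<le> L * norm (u - v)"
    and B2: "\<And>u v. u \<in> joint_dom blk r \<Longrightarrow> v \<in> joint_dom blk r \<Longrightarrow>
        (G u - G v) \<bullet> (u - v) \<ge> \<eta> * (norm (u - v))^2"
    and eta_pos: "\<eta> > 0"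
    \<comment> \<open>the iterates are random vectors; VS-PGR scheme\<close>
    and x_meas: "\<And>j. x j \<in> borel_measurable M"
    and g_meas: "\<And>i j p. p < S j \<Longrightarrow> (\<lambda>\<omega>. g\<psi> i (x j \<omega>) (\<xi> i j p \<omega>)) \<in> borel_measurable M"
    and x0: "\<And>\<omega>. \<omega> \<in> space M \<Longrightarrow> x 0 \<omega> \<in> joint_dom blk r"
    and scheme: "\<And>j \<omega> i. \<omega> \<in> space M \<Longrightarrow>
        blk_proj blk i (x (Suc j) \<omega>) =
          prox blk i \<alpha> (r i) (blk_proj blk i (x j \<omega>) -
             (\<alpha> / real (S j)) *\<^sub>R (\<Sum>p<S j. blk_proj blk i (g\<psi> i (x j \<omega>) (\<xi> i j p \<omega>))))"
    \<comment> \<open>Assumption B(iii)\<close>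
    and nu_nonneg: "\<nu>\<^sub>1 \<ge> 0" "\<nu>\<^sub>2 \<ge> 0"
    and B3: "\<And>j. AE \<omega> in M.
        nn_cond_exp M (nat_filtration M x j)
          (\<lambda>\<omega>. ennreal ((norm ((1 / real (S j)) *\<^sub>R
               (\<Sum>p<S j. \<Sum>i\<in>UNIV. blk_proj blk i (g\<psi> i (x j \<omega>) (\<xi> i j p \<omega>))) - G (x j \<omega>)))^2)) \<omega>
        \<le> ennreal ((\<nu>\<^sub>1^2 * (norm (x j \<omega>))^2 + \<nu>\<^sub>2^2) / real (S j))"
    \<comment> \<open>x* is the Nash equilibrium\<close>
    and NE: "is_NE blk f r xs"
    \<comment> \<open>step size and batch sizes\<close>
    and alpha_pos: "\<alpha> > 0" and alpha_le: "\<alpha> \<le> L"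
    and S_mono: "mono S"
    and S0: "real (S 0) \<ge> 1 / \<alpha>^2"
  shows "let Lt = sqrt (1 + 2 * (1 + 2 * \<alpha>^2) * \<nu>\<^sub>1^2 + 2 * L^2);
             \<nu>sq = 2 * (1 + 2 * \<alpha>^2) * \<nu>\<^sub>1^2 * (norm xs)^2 + (1 + 2 * \<alpha>^2) * \<nu>\<^sub>2^2
         in AE \<omega> in M.
              nn_cond_exp M (nat_filtration M x k) (\<lambda>\<omega>. ennreal ((norm (x (Suc k) \<omega> - xs))^2)) \<omega>
              \<le> ennreal ((1 - 2 * \<alpha> * \<eta> + \<alpha>^2 * Lt^2) * (norm (x k \<omega> - xs))^2 + \<nu>sq / real (S k))"
proof -
  have Mne: "space M \<noteq> {}" using prob by (simp add: prob_space.not_empty)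
  then obtain \<omega>0 where \<omega>0: "\<omega>0 \<in> space M" by auto
  have x00: "x 0 \<omega>0 \<in> joint_dom blk r" using x0 \<omega>0 by auto
  have ne: "eff_dom blk i (r i) \<noteq> {}" for i using x00 unfolding joint_dom_def by auto
  have PS: "proxset (blk_space blk i) (r i) \<alpha>" for i
    unfolding proxset_def using blk_space_subspace blk_space_closed A1_convex[of i] A1_proper A1_lsc[of i]
      ne[of i] alpha_pos unfolding eff_dom_def by auto
  have dom: "x j \<omega> \<in> joint_dom blk r" if \<omega>: "\<omega> \<in> space M" for j \<omega>
  proof (cases j)
    case 0 thus ?thesis using x0 \<omega> by auto
  next
    case (Suc j')
    have "blk_proj blk i (x j \<omega>) \<in> eff_dom blk i (r i)" for i
      using scheme[where j=j' and \<omega>=\<omega> and i=i, OF \<omega>] prox_props[OF PS[of i]] unfolding Suc eff_dom_def by auto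
    thus ?thesis unfolding joint_dom_def by auto
  qed
  have xs_dom: "xs \<in> joint_dom blk r"
  proof -
    have "blk_proj blk i xs \<in> eff_dom blk i (r i)" for i
    proof -
      obtain y where y: "y \<in> eff_dom blk i (r i)" using ne by auto
      hence le: "ereal (f i xs) + r i (blk_proj blk i xs) \<le> ereal (f i (blk_upd blk i xs y)) + r i y"
        using NE unfolding is_NE_def eff_dom_def by auto
      have "ereal (f i (blk_upd blk i xs y)) + r i y < \<infinity>" using y unfolding eff_dom_def by auto
      hence "r i (blk_proj blk i xs) < \<infinity>" using le by (cases "r i (blk_proj blk i xs)") auto
      thus ?thesis unfolding eff_dom_def using blk_proj_in by auto
    qed
    thus ?thesis unfolding joint_dom_def by auto
  qed
  have xs_fix: "prox blk i \<alpha> (r i) (blk_proj blk i (xs - \<alpha> *\<^sub>R G xs)) = blk_proj blk i xs" for i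
  proof -
    define p where "p = blk_proj blk i xs"
    define Fi where "Fi y = f i (blk_upd blk i xs y)" for y
    have pV: "p \<in> blk_space blk i" and pf: "r i p < \<infinity>"
      using xs_dom unfolding joint_dom_def eff_dom_def p_def by auto
    obtain Rp where Rp: "r i p = ereal Rp" using pf A1_proper[OF pV] by (cases "r i p") auto
    have cvx: "convex (eff_dom blk i (r i))" using A1_convex[of i] unfolding convex_on_def by auto
    have deriv: "(Fi has_derivative (\<lambda>v. G xs \<bullet> blk_proj blk i v)) (at p)"
      using G_grad[OF xs_dom, of i] unfolding Fi_def p_def .
    have VI: "\<forall>u\<in>blk_space blk i. r i p + ereal ((blk_proj blk i (xs - \<alpha> *\<^sub>R G xs) - p) \<bullet> (u - p) / \<alpha>) \<le> r i u"
    proof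
      fix u assume uV: "u \<in> blk_space blk i"
      show "r i p + ereal ((blk_proj blk i (xs - \<alpha> *\<^sub>R G xs) - p) \<bullet> (u - p) / \<alpha>) \<le> r i u"
      proof (cases "r i u = \<infinity>")
        case True thus ?thesis by auto
      next
        case False
        hence uf: "r i u < \<infinity>" by (simp add: less_le)
        then obtain Ru where Ru: "r i u = ereal Ru" using A1_proper[OF uV] by (cases "r i u") auto
        define d where "d = u - p"
        have dV: "d \<in> blk_space blk i" unfolding d_def using uV pV
          by (simp add: blk_space_subspace subspace_diff)
        define h where "h t = Fi (p + t *\<^sub>R d)" for t :: real
        have hd: "(h has_real_derivative (G xs \<bullet> d)) (at 0)"
        proof -
          have l: "((\<lambda>t::real. p + t *\<^sub>R d) has_derivative (\<lambda>t. t *\<^sub>R d)) (at 0)"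
            by (auto intro!: derivative_eq_intros)
          have deriv': "(Fi has_derivative (\<lambda>v. G xs \<bullet> blk_proj blk i v)) (at (p + 0 *\<^sub>R d))"
            using deriv by simp
          have "(h has_derivative (\<lambda>t. G xs \<bullet> blk_proj blk i (t *\<^sub>R d))) (at 0)"
            unfolding h_def by (rule has_derivative_compose[OF l deriv'])
          moreover have "t * (G xs \<bullet> d) = G xs \<bullet> blk_proj blk i (t *\<^sub>R d)" for t
            using blk_proj_id[OF dV] by (simp add: blk_proj_scale)
          ultimately show ?thesis by (rule has_derivative_imp_has_field_derivative)
        qed
        hence "((\<lambda>t. (h (0 + t) - h 0) / t) \<longlongrightarrow> G xs \<bullet> d) (at 0)" by (simp add: DERIV_def)
        hence "((\<lambda>t. (h t - h 0) / t) \<longlongrightarrow> G xs \<bullet> d) (at 0)" by simp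
        hence limr: "((\<lambda>t. (h t - h 0) / t) \<longlongrightarrow> G xs \<bullet> d) (at_right 0)"
          by (rule tendsto_mono[OF at_le, rotated]) simp
        have pD: "p \<in> eff_dom blk i (r i)" using pV pf unfolding eff_dom_def by auto
        have uD: "u \<in> eff_dom blk i (r i)" using uV uf unfolding eff_dom_def by auto
        have lbt: "Rp - Ru \<le> (h t - h 0) / t" if t: "0 < t" "t < 1" for t
        proof -
          define y where "y = p + t *\<^sub>R d"
          have yeq: "y = (1 - t) *\<^sub>R p + t *\<^sub>R u" unfolding y_def d_def by (simp add: algebra_simps)
          have yD: "y \<in> eff_dom blk i (r i)" unfolding yeq using convexD[OF cvx pD uD, of "1-t" t] t by auto
          have yV: "y \<in> blk_space blk i" using yD unfolding eff_dom_def by auto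
          have cv: "real_of_ereal (r i y) \<le> (1 - t) * Rp + t * Ru"
            using convex_onD[OF A1_convex[of i], of t p u] t pD uD Rp Ru unfolding yeq by auto
          obtain Ry where Ry: "r i y = ereal Ry" using yD A1_proper[OF yV] unfolding eff_dom_def
            by (cases "r i y") auto
          have "ereal (f i xs) + r i p \<le> ereal (Fi y) + r i y"
            using NE yV unfolding is_NE_def Fi_def p_def by auto
          hence a: "f i xs + Rp \<le> Fi y + Ry" using Rp Ry by auto
          have b: "h 0 = f i xs" unfolding h_def Fi_def p_def by (simp add: blk_upd_proj)
          have c: "h t = Fi y" unfolding h_def y_def ..
          have e: "(1 - t) * Rp = Rp - t * Rp" "t * (Rp - Ru) = t * Rp - t * Ru" by (simp_all add: algebra_simps)
          have "t * (Rp - Ru) \<le> h t - h 0" using a b c e cv Ry by simp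
          thus ?thesis using t by (simp add: pos_le_divide_eq mult.commute)
        qed
        have lbd: "\<forall>\<^sub>F t in at_right 0. Rp - Ru \<le> (h t - h 0) / t"
          unfolding eventually_at_right_field using lbt by (intro exI[of _ 1]) auto
        have g1: "Rp - Ru \<le> G xs \<bullet> d" using tendsto_lowerbound[OF limr lbd] by simp
        have "blk_proj blk i (xs - \<alpha> *\<^sub>R G xs) - p = - (\<alpha> *\<^sub>R blk_proj blk i (G xs))"
          unfolding p_def by (simp add: blk_proj_diff blk_proj_scale)
        hence "(blk_proj blk i (xs - \<alpha> *\<^sub>R G xs) - p) \<bullet> (u - p) = - (\<alpha> * (blk_proj blk i (G xs) \<bullet> d))"
          unfolding d_def by simp
        also have "blk_proj blk i (G xs) \<bullet> d = G xs \<bullet> d" using blk_inner[OF dV] by simp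
        finally have "(blk_proj blk i (xs - \<alpha> *\<^sub>R G xs) - p) \<bullet> (u - p) / \<alpha> = - (G xs \<bullet> d)"
          using alpha_pos by simp
        thus ?thesis using Rp Ru g1 by simp
      qed
    qed
    show ?thesis unfolding p_def[symmetric] by (rule prox_eqI[OF PS pV pf VI])
  qed
  define c where "c = 1 - 2*\<alpha>*\<eta> + \<alpha>^2*(1 + 2*L^2)"
  define gh where "gh \<omega> = (1 / real (S k)) *\<^sub>R (\<Sum>p<S k. \<Sum>i\<in>UNIV. blk_proj blk i (g\<psi> i (x k \<omega>) (\<xi> i k p \<omega>)))" for \<omega>
  have Lpos: "L \<ge> 0" using alpha_pos alpha_le by auto
  have pw: "norm (x (Suc k) \<omega> - xs)^2 \<le> c * norm (x k \<omega> - xs)^2 + (1 + 2*\<alpha>^2) * norm (gh \<omega> - G (x k \<omega>))^2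
     \<and> 0 \<le> c * norm (x k \<omega> - xs)^2" if \<omega>: "\<omega> \<in> space M" for \<omega>
  proof -
    define xk where "xk = x k \<omega>"
    have xkd: "xk \<in> joint_dom blk r" using dom[OF \<omega>] unfolding xk_def .
    define A where "A = (xk - \<alpha> *\<^sub>R gh \<omega>) - (xs - \<alpha> *\<^sub>R G xs)"
    have blk_step: "norm (blk_proj blk i (x (Suc k) \<omega>) - blk_proj blk i xs) \<le> norm (blk_proj blk i A)" for i
    proof -
      have pg: "blk_proj blk i (gh \<omega>) = (1 / real (S k)) *\<^sub>R (\<Sum>p<S k. blk_proj blk i (g\<psi> i xk (\<xi> i k p \<omega>)))"
        unfolding gh_def xk_def by (simp add: blk_proj_scale blk_proj_sum blk_proj_proj)
      have arg: "blk_proj blk i xk - (\<alpha> / real (S k)) *\<^sub>R (\<Sum>p<S k. blk_proj blk i (g\<psi> i xk (\<xi> i k p \<omega>)))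
          = blk_proj blk i (xk - \<alpha> *\<^sub>R gh \<omega>)"
        unfolding blk_proj_diff blk_proj_scale pg by simp
      define a where "a = blk_proj blk i (xk - \<alpha> *\<^sub>R gh \<omega>)"
      define b where "b = blk_proj blk i (xs - \<alpha> *\<^sub>R G xs)"
      have e1: "blk_proj blk i (x (Suc k) \<omega>) = prox blk i \<alpha> (r i) a"
        using scheme[where j=k and \<omega>=\<omega> and i=i, OF \<omega>] arg unfolding xk_def a_def by simp
      have e2: "blk_proj blk i xs = prox blk i \<alpha> (r i) b" using xs_fix[of i] unfolding b_def by simp
      have "norm (prox blk i \<alpha> (r i) a - prox blk i \<alpha> (r i) b) \<le> norm (a - b)"
      proof -
        note pa = prox_props[OF PS[of i], of a]
        note pb = prox_props[OF PS[of i], of b]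
        show ?thesis
          by (rule proxset.VI_nonexp[OF PS[of i] pa[THEN conjunct1] pb[THEN conjunct1]
            pa[THEN conjunct2, THEN conjunct1] pb[THEN conjunct2, THEN conjunct1]
            pa[THEN conjunct2, THEN conjunct2] pb[THEN conjunct2, THEN conjunct2]])
      qed
      moreover have ab: "a - b = blk_proj blk i A" unfolding a_def b_def A_def by (simp add: blk_proj_diff)
      ultimately show ?thesis unfolding e1 e2 ab by simp
    qed
    have Aeq: "A = (xk - xs) - \<alpha> *\<^sub>R ((G xk - G xs) + (gh \<omega> - G xk))" unfolding A_def by (simp add: algebra_simps)
    have "norm (x (Suc k) \<omega> - xs)^2 = (\<Sum>i\<in>UNIV. norm (blk_proj blk i (x (Suc k) \<omega>) - blk_proj blk i xs)^2)"
      using blk_norm[of "x (Suc k) \<omega> - xs" blk] by (simp add: blk_proj_diff)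
    also have "\<dots> \<le> (\<Sum>i\<in>UNIV. norm (blk_proj blk i A)^2)"
      by (intro sum_mono power_mono blk_step norm_ge_zero)
    also have "\<dots> = norm A ^2" using blk_norm[of A blk] by simp
    also have "\<dots> = norm ((xk - xs) - \<alpha> *\<^sub>R ((G xk - G xs) + (gh \<omega> - G xk)))^2" unfolding Aeq ..
    finally have 1: "norm (x (Suc k) \<omega> - xs)^2 \<le> norm ((xk - xs) - \<alpha> *\<^sub>R ((G xk - G xs) + (gh \<omega> - G xk)))^2" .
    have De: "(G xk - G xs) \<bullet> (xk - xs) \<ge> \<eta> * norm (xk - xs)^2" using B2[OF xkd xs_dom] .
    have DL: "norm (G xk - G xs) \<le> L * norm (xk - xs)" using B1[OF xkd xs_dom] .
    note k1 = key_ineq[OF De DL alpha_pos Lpos, of "gh \<omega> - G xk"]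
    note k2 = key_nonneg[OF De DL eta_pos, of \<alpha>]
    show ?thesis unfolding c_def xk_def[symmetric] using order_trans[OF 1 k1] k2 by blast
  qed
  define F where "F = nat_filtration M x k"
  define Gen where "Gen = {x j -` A \<inter> space M | j A. j \<le> k \<and> A \<in> sets borel}"
  have GenP: "Gen \<subseteq> Pow (space M)" unfolding Gen_def by auto
  have GenM: "Gen \<subseteq> sets M" unfolding Gen_def using x_meas by (auto intro: measurable_sets)
  have spF: "space F = space M" unfolding F_def nat_filtration_def Gen_def[symmetric]
    by (simp add: space_measure_of_conv)
  have setsF: "sets F = sigma_sets (space M) Gen" unfolding F_def nat_filtration_def Gen_def[symmetric]
    using GenP by (simp add: sets_measure_of)
  have subalg: "subalgebra M F" unfolding subalgebra_def using spF setsF sets.sigma_sets_subset[OF GenM] by auto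
  have xkF: "x k \<in> borel_measurable F"
  proof (rule measurableI)
    fix \<omega> assume "\<omega> \<in> space F" show "x k \<omega> \<in> space borel" by simp
  next
    fix A :: "(real^'d) set" assume "A \<in> sets borel"
    hence "x k -` A \<inter> space M \<in> Gen" unfolding Gen_def by blast
    thus "x k -` A \<inter> space F \<in> sets F" unfolding spF setsF by (rule sigma_sets.Basic)
  qed
  have "finite_measure_subalgebra M F"
    unfolding finite_measure_subalgebra_def finite_measure_subalgebra_axioms_def
    using prob subalg by (simp add: prob_space_def)
  then interpret sfs: sigma_finite_subalgebra M F by (rule finite_measure_subalgebra_is_sigma_finite)
  have Gcont: "continuous_on (joint_dom blk r) G"
    unfolding continuous_on_iff
  proof (intro ballI allI impI)
    fix u e assume u: "u \<in> joint_dom blk r" and e: "(0::real) < e"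
    show "\<exists>d>0. \<forall>v\<in>joint_dom blk r. dist v u < d \<longrightarrow> dist (G v) (G u) < e"
    proof (intro exI[of _ "e / (L + 1)"] conjI ballI impI)
      show "0 < e / (L + 1)" using e Lpos by auto
      fix v assume v: "v \<in> joint_dom blk r" and dv: "dist v u < e / (L + 1)"
      have "dist (G v) (G u) \<le> L * dist v u" using B1[OF v u] by (simp add: dist_norm)
      also have "\<dots> \<le> L * (e / (L + 1))" using dv Lpos by (intro mult_left_mono) auto
      also have "\<dots> < e" using e Lpos by (simp add: field_simps)
      finally show "dist (G v) (G u) < e" .
    qed
  qed
  have Gm: "(\<lambda>\<omega>. G (x k \<omega>)) \<in> borel_measurable M"
  proof -
    have "x k \<in> space M \<rightarrow> joint_dom blk r" using dom by auto
    hence "x k \<in> measurable M (restrict_space borel (joint_dom blk r))"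
      by (rule measurable_restrict_space2[OF _ x_meas])
    thus ?thesis by (rule measurable_compose[OF _ borel_measurable_continuous_on_restrict[OF Gcont]])
  qed
  have gm: "(\<lambda>\<omega>. blk_proj blk i (g\<psi> i (x k \<omega>) (\<xi> i k p \<omega>))) \<in> borel_measurable M" if "p < S k" for i p
    using measurable_compose[OF g_meas[OF that] blk_proj_meas] .
  have ghm: "gh \<in> borel_measurable M" unfolding gh_def
    by (intro borel_measurable_scaleR borel_measurable_const borel_measurable_sum gm) auto
  define Y where "Y \<omega> = ennreal (norm (x (Suc k) \<omega> - xs)^2)" for \<omega>
  define Ae where "Ae \<omega> = ennreal (c * norm (x k \<omega> - xs)^2)" for \<omega>
  define W where "W \<omega> = ennreal (norm (gh \<omega> - G (x k \<omega>))^2)" for \<omega>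
  define K where "K = ennreal (1 + 2*\<alpha>^2)"
  note [measurable] = x_meas xkF Gm ghm
  have Ym: "Y \<in> borel_measurable M" unfolding Y_def by measurable
  have AeF: "Ae \<in> borel_measurable F" unfolding Ae_def by measurable
  have AeM: "Ae \<in> borel_measurable M" using AeF by (rule measurable_from_subalg[OF subalg])
  have Wm: "W \<in> borel_measurable M" unfolding W_def by measurable
  have KWm: "(\<lambda>\<omega>. K * W \<omega>) \<in> borel_measurable M" using Wm by measurable
  have ptw: "Y \<omega> \<le> Ae \<omega> + K * W \<omega>" if \<omega>: "\<omega> \<in> space M" for \<omega>
  proof -
    have p1: "norm (x (Suc k) \<omega> - xs)^2 \<le> c * norm (x k \<omega> - xs)^2 + (1 + 2*\<alpha>^2) * norm (gh \<omega> - G (x k \<omega>))^2"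
      and p2: "0 \<le> c * norm (x k \<omega> - xs)^2" using pw[OF \<omega>] by auto
    have "Y \<omega> \<le> ennreal (c * norm (x k \<omega> - xs)^2 + (1 + 2*\<alpha>^2) * norm (gh \<omega> - G (x k \<omega>))^2)"
      unfolding Y_def using p1 by (rule ennreal_leI)
    also have "\<dots> = Ae \<omega> + K * W \<omega>" unfolding Ae_def K_def W_def
      using p2 by (simp add: ennreal_plus ennreal_mult add_nonneg_nonneg)
    finally show ?thesis .
  qed
  have a1: "AE \<omega> in M. nn_cond_exp M F Y \<omega> \<le> nn_cond_exp M F (\<lambda>\<omega>. Ae \<omega> + K * W \<omega>) \<omega>"
    by (rule sfs.nn_cond_exp_mono) (use ptw Ym AeM KWm in auto)
  have a2: "AE \<omega> in M. nn_cond_exp M F Ae \<omega> + nn_cond_exp M F (\<lambda>\<omega>. K * W \<omega>) \<omega> = nn_cond_exp M F (\<lambda>\<omega>. Ae \<omega> + K * W \<omega>) \<omega>"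
    by (rule sfs.nn_cond_exp_sum[OF AeM KWm])
  have a3: "AE \<omega> in M. Ae \<omega> = nn_cond_exp M F Ae \<omega>" by (rule sfs.nn_cond_exp_F_meas[OF AeF])
  have a4: "AE \<omega> in M. K * nn_cond_exp M F W \<omega> = nn_cond_exp M F (\<lambda>\<omega>. K * W \<omega>) \<omega>"
    using sfs.nn_cond_exp_prod[of "\<lambda>_. K" W] Wm by simp
  have a5: "AE \<omega> in M. nn_cond_exp M F W \<omega> \<le> ennreal ((\<nu>\<^sub>1^2 * (norm (x k \<omega>))^2 + \<nu>\<^sub>2^2) / real (S k))"
    using B3[of k] unfolding F_def W_def gh_def .
  have S0pos: "S 0 > 0"
  proof -
    have "1 / \<alpha>^2 > 0" using alpha_pos by simp
    hence "real (S 0) > 0" using S0 by linarith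
    thus ?thesis by simp
  qed
  have Skge: "S k \<ge> S 0" using S_mono by (simp add: monoD)
  have sp: "real (S k) > 0" using S0pos Skge by simp
  have s1: "1 / real (S k) \<le> \<alpha>^2"
  proof -
    have "1 / \<alpha>^2 \<le> real (S k)" using S0 Skge by (meson of_nat_le_iff order_trans)
    hence "1 \<le> \<alpha>^2 * real (S k)" using alpha_pos by (simp add: field_simps)
    thus ?thesis using sp by (simp add: field_simps)
  qed
  show ?thesis unfolding Let_def F_def[symmetric]
    using a1 a2 a3 a4 a5 AE_space
  proof eventually_elim
    case (elim \<omega>)
    have E0: "0 \<le> norm (x k \<omega> - xs)^2" by simp
    have c0: "0 \<le> c * norm (x k \<omega> - xs)^2" using pw[OF elim(6)] by auto
    have Xb: "norm (x k \<omega>)^2 \<le> 2 * norm (x k \<omega> - xs)^2 + 2 * norm xs^2"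
    proof -
      have "norm (x k \<omega>) \<le> norm (x k \<omega> - xs) + norm xs" using norm_triangle_ineq[of "x k \<omega> - xs" xs] by simp
      hence "norm (x k \<omega>)^2 \<le> (norm (x k \<omega> - xs) + norm xs)^2" by (intro power_mono) auto
      also have "\<dots> \<le> 2 * norm (x k \<omega> - xs)^2 + 2 * norm xs^2"
        using sum_squares_bound[of "norm (x k \<omega> - xs)" "norm xs"] by (simp add: power2_eq_square algebra_simps)
      finally show ?thesis .
    qed
    have bnd: "0 \<le> (\<nu>\<^sub>1^2 * (norm (x k \<omega>))^2 + \<nu>\<^sub>2^2) / real (S k)" using sp by simp
    have "nn_cond_exp M F Y \<omega> \<le> nn_cond_exp M F Ae \<omega> + nn_cond_exp M F (\<lambda>\<omega>. K * W \<omega>) \<omega>"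
      using elim(1) elim(2) by simp
    also have "\<dots> = Ae \<omega> + K * nn_cond_exp M F W \<omega>" using elim(3) elim(4) by simp
    also have "\<dots> \<le> Ae \<omega> + K * ennreal ((\<nu>\<^sub>1^2 * (norm (x k \<omega>))^2 + \<nu>\<^sub>2^2) / real (S k))"
      using elim(5) by (intro add_left_mono mult_left_mono) auto
    also have "\<dots> = ennreal (c * norm (x k \<omega> - xs)^2 + (1 + 2*\<alpha>^2) * ((\<nu>\<^sub>1^2 * (norm (x k \<omega>))^2 + \<nu>\<^sub>2^2) / real (S k)))"
    proof -
      define B where "B = (\<nu>\<^sub>1^2 * (norm (x k \<omega>))^2 + \<nu>\<^sub>2^2) / real (S k)"
      have K0: "0 \<le> 1 + 2*\<alpha>^2" by (simp add: add_nonneg_nonneg)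
      have B0: "0 \<le> B" using bnd unfolding B_def .
      have "K * ennreal B = ennreal ((1 + 2*\<alpha>^2) * B)" unfolding K_def by (rule ennreal_mult[OF K0 B0, symmetric])
      moreover have "ennreal (c * norm (x k \<omega> - xs)^2) + ennreal ((1 + 2*\<alpha>^2) * B)
          = ennreal (c * norm (x k \<omega> - xs)^2 + (1 + 2*\<alpha>^2) * B)"
        by (rule ennreal_plus[symmetric]) (use c0 K0 B0 in auto)
      ultimately show ?thesis unfolding Ae_def B_def[symmetric] by simp
    qed
    also have "\<dots> \<le> ennreal ((1 - 2 * \<alpha> * \<eta> + \<alpha>^2 * (sqrt (1 + 2 * (1 + 2 * \<alpha>^2) * \<nu>\<^sub>1^2 + 2 * L^2))^2) * (norm (x k \<omega> - xs))^2
        + (2 * (1 + 2 * \<alpha>^2) * \<nu>\<^sub>1^2 * (norm xs)^2 + (1 + 2 * \<alpha>^2) * \<nu>\<^sub>2^2) / real (S k))"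
      by (intro ennreal_leI) (unfold c_def, rule final_real[OF s1 sp E0 Xb])
    finally have fin: "nn_cond_exp M F Y \<omega> \<le> ennreal ((1 - 2 * \<alpha> * \<eta> + \<alpha>^2 * (sqrt (1 + 2 * (1 + 2 * \<alpha>^2) * \<nu>\<^sub>1^2 + 2 * L^2))^2) * (norm (x k \<omega> - xs))^2
        + (2 * (1 + 2 * \<alpha>^2) * \<nu>\<^sub>1^2 * (norm xs)^2 + (1 + 2 * \<alpha>^2) * \<nu>\<^sub>2^2) / real (S k))" .
    have Yeq: "(\<lambda>\<omega>. ennreal (norm (x (Suc k) \<omega> - xs)^2)) = Y" by (simp add: Y_def fun_eq_iff)
    show ?case unfolding Yeq using fin unfolding F_def .
  qed
qed

end
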